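(* Let $P,Q,R\in\mathbb P_d$. Then $$\operatorname{B}_R(P,Q)=\big\|\operatorname{Log}_R[P]-\operatorname{Log}_R[Q]\big\|_R^2,$$ where $\operatorname{Log}_R$ is the Bures–Wasserstein Riemannian logarithm at $R$ and $\|\cdot\|_R$ is the norm induced by the Bures–Wasserstein inner product on the tangent space at $R$.
   Context: $\mathbb P_d$ denotes the set of $d\times d$ complex positive definite matrices, $\mathbb H_d$ the Hermitian matrices. For $A,B\in\mathbb P_d$, the geometric mean is $A\#B:=A^{1/2}(A^{-1/2}BA^{-1/2})^{1/2}A^{1/2}$. The generalized fidelity between $P$ and $Q$ at base $R$ is $\operatorname{F}_R(P,Q):=\operatorname{Tr}\big[\sqrt{R^{1/2}PR^{1/2}}\,R^{-1}\sqrt{R^{1/2}QR^{1/2}}\big]$ (a complex number in general), and the squared generalized Bures distance is $\operatorname{B}_R(P,Q):=\operatorname{Tr}[P+Q]-2\,\mathrm{Re}\,\operatorname{F}_R(P,Q)$. For $R\in\mathbb P_d$ and $U\in\mathbb H_d$, $\mathcal L_R(U)$ denotes the unique solution $X$ of the Lyapunov equation $XR+RX=U$, and $\mathcal L_R^{-1}(Z):=ZR+RZ$. The Bures–Wasserstein inner product on $T_R\mathbb P_d\cong\mathbb H_d$ is $\langle U,V\rangle_R:=\operatorname{Tr}[\mathcal L_R(U)\,R\,\mathcal L_R(V)]$, with $\|U\|_R:=\sqrt{\langle U,U\rangle_R}$. The Bures–Wasserstein logarithm map is $\operatorname{Log}_R[P]:=\mathcal L_R^{-1}\big(R^{-1}\#P-\mathbb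 I\big)$. *)

theory Defs
  imports "HOL-Analysis.Analysis"
begin

definition adjoint_mat :: "complex^'d^'d \<Rightarrow> complex^'d^'d" where
  "adjoint_mat A = (\<chi> i j. cnj (A $ j $ i))"

definition hermitian :: "complex^'d^'d \<Rightarrow> bool" where
  "hermitian A \<longleftrightarrow> adjoint_mat A = A"

definition cinner :: "complex^'d \<Rightarrow> complex^'d \<Rightarrow> complex" where
  "cinner x y = (\<Sum>i\<in>UNIV. cnj (x $ i) * y $ i)"

definition pos_def :: "complex^'d^'d \<Rightarrow> bool" where
  "pos_def A \<longleftrightarrow> hermitian A \<and>
     (\<forall>x. x \<noteq> 0 \<longrightarrow> cinner x (A *v x) \<in> \<real> \<and> Re (cinner x (A *v x)) > 0)"

definition pos_semidef :: "complex^'d^'d \<Rightarrow> bool" where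
  "pos_semidef A \<longleftrightarrow> hermitian A \<and>
     (\<forall>x. cinner x (A *v x) \<in> \<real> \<and> Re (cinner x (A *v x)) \<ge> 0)"

definition msqrt :: "complex^'d^'d \<Rightarrow> complex^'d^'d" where
  "msqrt A = (THE X. pos_semidef X \<and> X ** X = A)"

definition geo_mean :: "complex^'d^'d \<Rightarrow> complex^'d^'d \<Rightarrow> complex^'d^'d" where
  "geo_mean A B = (let S = msqrt A; Si = matrix_inv S in S ** msqrt (Si ** B ** Si) ** S)"

definition gen_fidelity :: "complex^'d^'d \<Rightarrow> complex^'d^'d \<Rightarrow> complex^'d^'d \<Rightarrow> complex" where
  "gen_fidelity R P Q = (let S = msqrt R in
     trace (msqrt (S ** P ** S) ** matrix_inv R ** msqrt (S ** Q ** S)))"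

definition gen_bures :: "complex^'d^'d \<Rightarrow> complex^'d^'d \<Rightarrow> complex^'d^'d \<Rightarrow> complex" where
  "gen_bures R P Q = trace (P + Q) - 2 * complex_of_real (Re (gen_fidelity R P Q))"

definition lyap :: "complex^'d^'d \<Rightarrow> complex^'d^'d \<Rightarrow> complex^'d^'d" where
  "lyap R U = (THE X. X ** R + R ** X = U)"

definition lyap_inv :: "complex^'d^'d \<Rightarrow> complex^'d^'d \<Rightarrow> complex^'d^'d" where
  "lyap_inv R Z = Z ** R + R ** Z"

definition bw_inner :: "complex^'d^'d \<Rightarrow> complex^'d^'d \<Rightarrow> complex^'d^'d \<Rightarrow> complex" where
  "bw_inner R U V = trace (lyap R U ** R ** lyap R V)"

definition bw_norm :: "complex^'d^'d \<Rightarrow> complex^'d^'d \<Rightarrow> real" where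
  "bw_norm R U = sqrt (Re (bw_inner R U U))"

definition bw_log :: "complex^'d^'d \<Rightarrow> complex^'d^'d \<Rightarrow> complex^'d^'d" where
  "bw_log R P = lyap_inv R (geo_mean (matrix_inv R) P - mat 1)"

end

theory Submission
  imports Defs
begin


lemma cinner_add_right: "cinner x (y + z) = cinner x y + cinner x z"
  by (simp add: cinner_def sum.distrib distrib_left)
lemma cinner_add_left: "cinner (x + y) z = cinner x z + cinner y z"
  by (simp add: cinner_def sum.distrib distrib_right)
lemma cinner_diff_right: "cinner x (y - z) = cinner x y - cinner x z"
  by (simp add: cinner_def sum_subtractf right_diff_distrib)
lemma cinner_diff_left: "cinner (x - y) z = cinner x z - cinner y z"
  by (simp add: cinner_def sum_subtractf left_diff_distrib)
lemma cinner_scale_right: "cinner x (c *s y) = c * cinner x y"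
  by (simp add: cinner_def sum_distrib_left mult_ac)
lemma cinner_scale_left: "cinner (c *s x) y = cnj c * cinner x y"
  by (simp add: cinner_def sum_distrib_left mult_ac)
lemma cinner_zero_right[simp]: "cinner x 0 = 0"
  by (simp add: cinner_def)
lemma cinner_zero_left[simp]: "cinner 0 x = 0"
  by (simp add: cinner_def)
lemma cinner_commute: "cinner y x = cnj (cinner x y)"
  by (simp add: cinner_def mult.commute)
lemma cinner_sum_right: "cinner x (sum f A) = (\<Sum>a\<in>A. cinner x (f a))"
  by (induction A rule: infinite_finite_induct) (auto simp: cinner_add_right)
lemma cinner_sum_left: "cinner (sum f A) x = (\<Sum>a\<in>A. cinner (f a) x)"
  by (induction A rule: infinite_finite_induct) (auto simp: cinner_add_left)

lemma cinner_self: "cinner x x = complex_of_real ((norm x)^2)"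
proof -
  have "(norm x)^2 = (\<Sum>i\<in>UNIV. (norm (x$i))^2)"
    by (simp add: norm_vec_def L2_set_def sum_nonneg)
  moreover have "\<And>i. cnj (x$i) * x$i = complex_of_real ((norm (x$i))^2)"
    by (metis complex_norm_square mult.commute)
  ultimately show ?thesis
    by (simp add: cinner_def del: of_real_power)
qed

lemma cinner_self_Re: "Re (cinner x x) = (norm x)^2"
  by (simp add: cinner_self)

lemma cinner_self_eq0: "cinner x x = 0 \<longleftrightarrow> x = 0"
  by (simp add: cinner_self)

lemma scaleR_as_s: "r *\<^sub>R (x::complex^'d) = complex_of_real r *s x"
  by (simp add: vec_eq_iff) (simp add: scaleR_conv_of_real)

lemma mv_scale: "(A::complex^'d^'d) *v (c *s x) = c *s (A *v x)"
  by (simp add: vec_eq_iff matrix_vector_mult_def sum_distrib_left mult_ac)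

lemma mv_sum: "(A::complex^'d^'d) *v (sum f S) = (\<Sum>a\<in>S. A *v f a)"
  by (induction S rule: infinite_finite_induct) (auto simp: matrix_vector_right_distrib)

lemma sum_mv: "(sum f S :: complex^'d^'d) *v x = (\<Sum>a\<in>S. f a *v x)"
  by (induction S rule: infinite_finite_induct) (auto simp: matrix_vector_mult_add_rdistrib)

lemma scaleR_mv: "(r *\<^sub>R (A::complex^'d^'d)) *v x = r *\<^sub>R (A *v x)"
  by (simp add: vec_eq_iff matrix_vector_mult_def scaleR_sum_right)

lemma cinner_adjoint: "cinner x (A *v y) = cinner (adjoint_mat A *v x) y"
  apply (simp add: cinner_def matrix_vector_mult_def adjoint_mat_def sum_distrib_left sum_distrib_right mult_ac)
  apply (subst sum.swap) apply simp done

lemma cinner_herm: "hermitian A \<Longrightarrow> cinner x (A *v y) = cinner (A *v x) y"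
  by (simp add: cinner_adjoint hermitian_def)

lemma cinner_herm_real: "hermitian A \<Longrightarrow> cinner x (A *v x) = complex_of_real (Re (cinner x (A *v x)))"
  by (metis cinner_commute cinner_herm complex_is_Real_iff of_real_Re Reals_cnj_iff)

lemma adjoint_mult: "adjoint_mat (A ** B) = adjoint_mat B ** adjoint_mat (A::complex^'d^'d)"
  by (simp add: adjoint_mat_def matrix_matrix_mult_def vec_eq_iff mult.commute)
lemma adjoint_add: "adjoint_mat (A + B) = adjoint_mat A + adjoint_mat (B::complex^'d^'d)"
  by (simp add: adjoint_mat_def vec_eq_iff)
lemma adjoint_diff: "adjoint_mat (A - B) = adjoint_mat A - adjoint_mat (B::complex^'d^'d)"
  by (simp add: adjoint_mat_def vec_eq_iff)
lemma adjoint_mat1: "adjoint_mat (mat 1 :: complex^'d^'d) = mat 1"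
  by (simp add: adjoint_mat_def vec_eq_iff mat_def)
lemma trace_adjoint: "trace (adjoint_mat (A::complex^'d^'d)) = cnj (trace A)"
  by (simp add: adjoint_mat_def trace_def)



lemma cont_quad: "continuous_on K (\<lambda>y::complex^'d. Re (cinner y ((A::complex^'d^'d) *v y)))"
  unfolding cinner_def matrix_vector_mult_def
  by (intro continuous_intros)

lemma cont_cinner: "continuous_on K (\<lambda>y::complex^'d. cinner v y)"
  unfolding cinner_def by (intro continuous_intros)

lemma quad_expand:
  fixes B :: "complex^'d^'d"
  shows "cinner (u + complex_of_real t *s w) (B *v (u + complex_of_real t *s w)) =
    cinner u (B *v u) + complex_of_real t * cinner u (B *v w) + complex_of_real t * cinner w (B *v u)
     + complex_of_real t * complex_of_real t * cinner w (B *v w)"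
  by (simp add: matrix_vector_right_distrib mv_scale cinner_add_left cinner_add_right
      cinner_scale_left cinner_scale_right algebra_simps)

lemma psd_zero:
  fixes B :: "complex^'d^'d"
  assumes herm: "hermitian B" and add: "\<forall>x\<in>W. \<forall>y\<in>W. x+y\<in>W"
    and sc: "\<forall>c x. x\<in>W \<longrightarrow> c *s x \<in> W" and inv: "\<forall>x\<in>W. B *v x \<in> W"
    and nn: "\<forall>y\<in>W. 0 \<le> Re (cinner y (B *v y))" and u: "u\<in>W"
    and z: "Re (cinner u (B *v u)) = 0"
  shows "B *v u = 0"
proof (rule ccontr)
  assume ne: "B *v u \<noteq> 0"
  define w where "w = B *v u"
  have wW: "w \<in> W" using inv u w_def by auto
  define a where "a = Re (cinner w w)"
  define c where "c = Re (cinner w (B *v w))"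
  have a: "a > 0" using ne unfolding a_def w_def cinner_self_Re by simp
  have c: "c \<ge> 0" using nn wW c_def by auto
  have e1: "cinner u (B *v w) = cinner w w" using cinner_herm[OF herm] w_def by metis
  have e2: "cinner w (B *v u) = cinner w w" using w_def by simp
  have key: "0 \<le> 2*t*a + t*t*c" for t
  proof -
    have "u + complex_of_real t *s w \<in> W" using add sc u wW by auto
    then have "0 \<le> Re (cinner (u + complex_of_real t *s w) (B *v (u + complex_of_real t *s w)))"
      using nn by auto
    also have "\<dots> = 2*t*a + t*t*c"
      unfolding quad_expand e1 e2 using z by (simp add: a_def c_def)
    finally show ?thesis .
  qed
  define t where "t = - a / (c+1)"
  have "0 \<le> 2*t*a + t*t*c" by (rule key)
  then have "0 \<le> (2*t*a + t*t*c) * ((c+1)*(c+1))" using c by simp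
  also have "\<dots> = 2*a*(t*(c+1))*(c+1) + (t*(c+1))*(t*(c+1))*c" by (simp add: algebra_simps)
  also have "t*(c+1) = -a" unfolding t_def using c by simp
  finally have "a*a*(c+2) \<le> 0" by (simp add: algebra_simps)
  moreover have "a*a*(c+2) > 0" using a c by simp
  ultimately show False by simp
qed

lemma scaleR_mv_c: "(A::complex^'d^'d) *v (r *\<^sub>R x) = r *\<^sub>R (A *v x)"
  by (simp add: scaleR_as_s mv_scale)

lemma max_eigvec:
  fixes A :: "complex^'d^'d"
  assumes herm: "hermitian A" and add: "\<forall>x\<in>W. \<forall>y\<in>W. x+y\<in>W"
    and sc: "\<forall>c x. x\<in>W \<longrightarrow> c *s x \<in> W" and inv: "\<forall>x\<in>W. A *v x \<in> W"
    and cl: "closed W" and x0: "x0 \<in> W" "x0 \<noteq> 0"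
  shows "\<exists>u\<in>W. norm u = 1 \<and> A *v u = complex_of_real (Re (cinner u (A *v u))) *s u"
proof -
  define f where "f y = Re (cinner y (A *v y))" for y
  define K where "K = W \<inter> sphere 0 1"
  have "compact K" unfolding K_def using cl by (intro closed_Int_compact) auto
  have "(1/norm x0) *\<^sub>R x0 \<in> W" using sc x0 scaleR_as_s by metis
  then have x1: "(1/norm x0) *\<^sub>R x0 \<in> K" unfolding K_def using x0 by auto
  have "continuous_on K f" unfolding f_def by (rule cont_quad)
  then obtain u where u: "u \<in> K" and umax: "\<forall>y\<in>K. f y \<le> f u"
    using continuous_attains_sup[of K f] \<open>compact K\<close> x1 by blast
  define \<mu> where "\<mu> = f u"
  have uW: "u \<in> W" and nu: "norm u = 1" using u K_def by auto
  have bound: "f y \<le> \<mu> * (norm y)^2" if yW: "y \<in> W" for y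
  proof (cases "y = 0")
    case True then show ?thesis by (simp add: f_def)
  next
    case False
    have "(1/norm y) *\<^sub>R y \<in> W" using sc yW scaleR_as_s by metis
    then have "(1/norm y) *\<^sub>R y \<in> K" unfolding K_def using False by auto
    then have "f ((1/norm y) *\<^sub>R y) \<le> \<mu>" using umax \<mu>_def by auto
    moreover have "f ((1/norm y) *\<^sub>R y) = f y / (norm y)^2"
      unfolding f_def by (simp add: scaleR_as_s mv_scale cinner_scale_left cinner_scale_right power2_eq_square)
    ultimately show ?thesis using False by (simp add: field_simps)
  qed
  define B where "B = \<mu> *\<^sub>R mat 1 - A"
  have Bv: "B *v y = complex_of_real \<mu> *s y - A *v y" for y
    unfolding B_def by (simp add: matrix_vector_mult_diff_rdistrib scaleR_mv scaleR_as_s)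
  have hB: "hermitian B" using herm unfolding B_def hermitian_def
    by (simp add: adjoint_diff adjoint_mat_def vec_eq_iff mat_def)
  have Binv: "\<forall>x\<in>W. B *v x \<in> W"
  proof
    fix x assume "x\<in>W"
    then have "complex_of_real \<mu> *s x \<in> W" "(-1) *s (A *v x) \<in> W" using sc inv by blast+
    then have "complex_of_real \<mu> *s x + (-1) *s (A *v x) \<in> W" using add by auto
    moreover have "complex_of_real \<mu> *s x + (-1) *s (A *v x) = B *v x"
      by (simp add: Bv vec_eq_iff)
    ultimately show "B *v x \<in> W" by simp
  qed
  have qB: "Re (cinner y (B *v y)) = \<mu> * (norm y)^2 - f y" for y
    by (simp add: Bv cinner_diff_right cinner_scale_right cinner_self f_def)
  have "B *v u = 0"
    apply (rule psd_zero[OF hB add sc Binv _ uW])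
    using bound qB apply simp
    using qB nu \<mu>_def by simp
  then have "A *v u = complex_of_real \<mu> *s u" by (simp add: Bv)
  then show ?thesis using uW nu \<mu>_def f_def by auto
qed



definition onb :: "(complex^'d) set \<Rightarrow> bool" where
  "onb S \<longleftrightarrow> (\<forall>v\<in>S. \<forall>w\<in>S. cinner v w = (if v = w then 1 else 0))"

lemma inner_cinner: "inner x y = Re (cinner (x::complex^'d) y)"
  by (simp add: inner_vec_def cinner_def inner_complex_def Re_sum)

lemma onb_finite_card:
  fixes S :: "(complex^'d) set"
  assumes o: "onb S"
  shows "finite S \<and> card S \<le> DIM(complex^'d)"
proof -
  have "pairwise orthogonal S" using o
    by (auto simp: pairwise_def orthogonal_def inner_cinner onb_def)
  moreover have "0 \<notin> S" using o unfolding onb_def by force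
  ultimately have "independent S" by (rule pairwise_orthogonal_independent)
  then show ?thesis by (rule independent_bound)
qed

definition eig_set :: "complex^'d^'d \<Rightarrow> (complex^'d) set \<Rightarrow> bool" where
  "eig_set A S \<longleftrightarrow> onb S \<and> (\<forall>v\<in>S. A *v v = complex_of_real (Re (cinner v (A *v v))) *s v)"

lemma spectral:
  fixes A :: "complex^'d^'d"
  assumes herm: "hermitian A"
  shows "\<exists>S. finite S \<and> eig_set A S \<and> (\<forall>x. (\<forall>v\<in>S. cinner v x = 0) \<longrightarrow> x = 0)"
proof -
  have "eig_set A {}" by (simp add: eig_set_def onb_def)
  moreover have "\<forall>S. eig_set A S \<longrightarrow> card S < DIM(complex^'d) + 1"
    using onb_finite_card unfolding eig_set_def by fastforce
  ultimately obtain S where S: "eig_set A S" and Smax: "\<forall>T. eig_set A T \<longrightarrow> card T \<le> card S"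
    using Lattices_Big.ex_has_greatest_nat[of "eig_set A" "{}" card "DIM(complex^'d) + 1"] by blast
  have fin: "finite S" using S onb_finite_card unfolding eig_set_def by blast
  have "\<forall>x. (\<forall>v\<in>S. cinner v x = 0) \<longrightarrow> x = 0"
  proof (rule ccontr)
    assume "\<not> ?thesis"
    then obtain x0 where x0: "\<forall>v\<in>S. cinner v x0 = 0" "x0 \<noteq> 0" by blast
    define W where "W = {y. \<forall>v\<in>S. cinner v y = 0}"
    have add: "\<forall>x\<in>W. \<forall>y\<in>W. x+y\<in>W" unfolding W_def by (simp add: cinner_add_right)
    have sc: "\<forall>c x. x\<in>W \<longrightarrow> c *s x \<in> W" unfolding W_def by (simp add: cinner_scale_right)
    have inv: "\<forall>x\<in>W. A *v x \<in> W"
    proof (clarsimp simp: W_def)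
      fix x v assume xw: "\<forall>v\<in>S. cinner v x = 0" and v: "v \<in> S"
      have "cinner v (A *v x) = cinner (A *v v) x" by (rule cinner_herm[OF herm])
      also have "\<dots> = 0" using S v xw unfolding eig_set_def
        by (metis cinner_scale_left mult_zero_right)
      finally show "cinner v (A *v x) = 0" .
    qed
    have cl: "closed W"
    proof -
      have "W = (\<Inter>v\<in>S. {y. cinner v y = 0})" unfolding W_def by auto
      moreover have "closed {y. cinner v y = 0}" for v :: "complex^'d"
        by (rule closed_Collect_eq) (auto intro: cont_cinner continuous_intros)
      ultimately show ?thesis by auto
    qed
    obtain u where u: "u \<in> W" "norm u = 1" "A *v u = complex_of_real (Re (cinner u (A *v u))) *s u"
      using max_eigvec[OF herm add sc inv cl, of x0] x0 W_def by auto
    have uu: "cinner u u = 1" using u(2) by (simp add: cinner_self)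
    have uS: "u \<notin> S" using u(1) uu unfolding W_def by auto
    have uw: "\<forall>w\<in>S. cinner w u = 0" using u(1) W_def by auto
    have cu: "\<forall>w\<in>S. cinner u w = 0"
    proof
      fix w assume "w \<in> S"
      then have "cinner w u = 0" using uw by auto
      then show "cinner u w = 0" using cinner_commute[of u w] by simp
    qed
    have "onb (insert u S)" unfolding onb_def
    proof (intro ballI)
      fix v w assume v: "v \<in> insert u S" and w: "w \<in> insert u S"
      show "cinner v w = (if v = w then 1 else 0)"
        using v w uS uu uw cu S unfolding eig_set_def onb_def by auto
    qed
    then have "eig_set A (insert u S)"
      using S u(3) unfolding eig_set_def by auto
    then have "card (insert u S) \<le> card S" using Smax by blast
    then show False using fin uS by simp
  qed
  then show ?thesis using fin S by blast
qed



definition complete_set :: "(complex^'d) set \<Rightarrow> bool" where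
  "complete_set S \<longleftrightarrow> (\<forall>x. (\<forall>v\<in>S. cinner v x = 0) \<longrightarrow> x = 0)"

lemma cinner_onb_sum:
  assumes "onb S" "finite S" "v \<in> S"
  shows "cinner v (\<Sum>w\<in>S. c w *s w) = c v"
proof -
  have "cinner v (\<Sum>w\<in>S. c w *s w) = (\<Sum>w\<in>S. c w * (if v = w then 1 else 0))"
    using assms(1,3) unfolding onb_def by (simp add: cinner_sum_right cinner_scale_right)
  also have "\<dots> = c v" using assms(2,3) by (simp add: if_distrib sum.delta cong: if_cong)
  finally show ?thesis .
qed

lemma expand:
  assumes "onb S" "finite S" "complete_set S"
  shows "x = (\<Sum>v\<in>S. cinner v x *s v)"
proof -
  define r where "r = x - (\<Sum>v\<in>S. cinner v x *s v)"
  have "\<forall>w\<in>S. cinner w r = 0"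
    using cinner_onb_sum[OF assms(1,2)] unfolding r_def by (simp add: cinner_diff_right)
  then have "r = 0" using assms(3) unfolding complete_set_def by blast
  then show ?thesis unfolding r_def by simp
qed

definition outer :: "complex^'d \<Rightarrow> complex^'d^'d" where
  "outer v = (\<chi> i j. v$i * cnj (v$j))"

lemma outer_mv: "outer v *v x = cinner v x *s v"
  by (simp add: outer_def matrix_vector_mult_def cinner_def vec_eq_iff sum_distrib_left mult_ac)

definition fmat :: "(complex^'d) set \<Rightarrow> (complex^'d \<Rightarrow> real) \<Rightarrow> complex^'d^'d" where
  "fmat S h = (\<Sum>v\<in>S. h v *\<^sub>R outer v)"

lemma fmat_mv: "fmat S h *v x = (\<Sum>v\<in>S. (complex_of_real (h v) * cinner v x) *s v)"
  unfolding fmat_def sum_mv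
  by (simp add: scaleR_mv outer_mv scaleR_as_s vec_eq_iff mult_ac)

lemma fmat_nth: "fmat S h $ i $ j = (\<Sum>v\<in>S. complex_of_real (h v) * (v$i * cnj (v$j)))"
  unfolding fmat_def by (simp add: outer_def) (simp add: scaleR_conv_of_real)

lemma fmat_herm: "hermitian (fmat S h)"
  unfolding hermitian_def adjoint_mat_def by (simp add: vec_eq_iff fmat_nth mult_ac)

lemma fmat_cong: "(\<And>v. v \<in> S \<Longrightarrow> g v = h v) \<Longrightarrow> fmat S g = fmat S h"
  unfolding fmat_def by (rule sum.cong) auto

lemma fmat_mult:
  assumes "onb S" "finite S"
  shows "fmat S g ** fmat S h = fmat S (\<lambda>v. g v * h v)"
proof -
  have "fmat S g *v (fmat S h *v x) = fmat S (\<lambda>v. g v * h v) *v x" for x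
  proof -
    have "fmat S g *v (fmat S h *v x) = (\<Sum>v\<in>S. (complex_of_real (g v) * cinner v (fmat S h *v x)) *s v)"
      by (rule fmat_mv)
    also have "\<dots> = (\<Sum>v\<in>S. (complex_of_real (g v) * (complex_of_real (h v) * cinner v x)) *s v)"
      unfolding fmat_mv by (intro sum.cong refl) (simp add: cinner_onb_sum[OF assms])
    also have "\<dots> = fmat S (\<lambda>v. g v * h v) *v x"
      unfolding fmat_mv by (simp add: mult_ac)
    finally show ?thesis .
  qed
  then show ?thesis by (simp add: matrix_eq matrix_vector_mul_assoc)
qed

lemma fmat_one:
  assumes "onb S" "finite S" "complete_set S"
  shows "fmat S (\<lambda>v. 1) = mat 1"
proof -
  have "fmat S (\<lambda>v. 1) *v x = mat 1 *v x" for x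
  proof -
    have "fmat S (\<lambda>v. 1) *v x = (\<Sum>v\<in>S. cinner v x *s v)" unfolding fmat_mv by simp
    also have "\<dots> = x" by (rule expand[OF assms, symmetric])
    finally show ?thesis by simp
  qed
  then show ?thesis using matrix_eq by blast
qed

lemma fmat_A:
  assumes "eig_set A S" "finite S" "complete_set S"
  shows "A = fmat S (\<lambda>v. Re (cinner v (A *v v)))"
proof -
  have o: "onb S" using assms(1) eig_set_def by auto
  have "A *v x = fmat S (\<lambda>v. Re (cinner v (A *v v))) *v x" for x
  proof -
    have e: "(\<Sum>v\<in>S. cinner v x *s v) = x" by (rule expand[OF o assms(2,3), symmetric])
    have "A *v x = A *v (\<Sum>v\<in>S. cinner v x *s v)" by (simp only: e)
    also have "\<dots> = (\<Sum>v\<in>S. cinner v x *s (A *v v))" by (simp add: mv_sum mv_scale)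
    also have "\<dots> = fmat S (\<lambda>v. Re (cinner v (A *v v))) *v x"
      unfolding fmat_mv
    proof (intro sum.cong refl)
      fix v assume v: "v \<in> S"
      define c where "c = Re (cinner v (A *v v))"
      have "A *v v = complex_of_real c *s v" using assms(1) v unfolding eig_set_def c_def by blast
      then show "cinner v x *s (A *v v) = (complex_of_real (Re (cinner v (A *v v))) * cinner v x) *s v"
        unfolding c_def[symmetric] by (simp add: vec_eq_iff mult_ac)
    qed
    finally show ?thesis .
  qed
  then show ?thesis using matrix_eq by blast
qed

lemma fmat_quad:
  "cinner x (fmat S h *v x) = complex_of_real (\<Sum>v\<in>S. h v * (cmod (cinner v x))^2)"
proof -
  have "cinner x (fmat S h *v x) = (\<Sum>v\<in>S. complex_of_real (h v) * cinner v x * cinner x v)"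
    unfolding fmat_mv by (simp add: cinner_sum_right cinner_scale_right)
  also have "\<dots> = (\<Sum>v\<in>S. complex_of_real (h v * (cmod (cinner v x))^2))"
  proof (intro sum.cong refl)
    fix v
    have "cinner v x * cinner x v = complex_of_real ((cmod (cinner v x))^2)"
      using complex_norm_square[of "cinner v x"] cinner_commute[of x v] by simp
    then show "complex_of_real (h v) * cinner v x * cinner x v = complex_of_real (h v * (cmod (cinner v x))^2)"
      by (simp add: mult.assoc)
  qed
  finally show ?thesis by simp
qed

lemma fmat_psd:
  fixes S :: "(complex^'d) set"
  assumes "\<And>v. v \<in> S \<Longrightarrow> h v \<ge> 0"
  shows "pos_semidef (fmat S h)"
  unfolding pos_semidef_def
proof (rule conjI[OF fmat_herm], intro allI)
  fix x :: "complex^'d"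
  have "0 \<le> (\<Sum>v\<in>S. h v * (cmod (cinner v x))^2)" using assms by (auto intro!: sum_nonneg)
  then show "cinner x (fmat S h *v x) \<in> \<real> \<and> 0 \<le> Re (cinner x (fmat S h *v x))"
    unfolding fmat_quad by simp
qed

lemma fmat_pd:
  fixes S :: "(complex^'d) set"
  assumes "finite S" "complete_set S" "\<And>v. v \<in> S \<Longrightarrow> h v > 0"
  shows "pos_def (fmat S h)"
  unfolding pos_def_def
proof (rule conjI[OF fmat_herm], intro allI impI)
  fix x :: "complex^'d" assume "x \<noteq> 0"
  then obtain v where v: "v \<in> S" "cinner v x \<noteq> 0" using assms(2) complete_set_def by blast
  have "0 < h v * (cmod (cinner v x))^2" using v assms(3) by simp
  also have "\<dots> \<le> (\<Sum>v\<in>S. h v * (cmod (cinner v x))^2)"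
    using v assms by (intro member_le_sum) (simp_all add: less_imp_le)
  finally show "cinner x (fmat S h *v x) \<in> \<real> \<and> 0 < Re (cinner x (fmat S h *v x))"
    unfolding fmat_quad by simp
qed



type_synonym ('d) cmat = "complex^('d::finite)^'d"

lemma mm_add_r: "((A::('d::finite) cmat) + B) ** C = A ** C + B ** C"
  by (simp add: matrix_matrix_mult_def vec_eq_iff sum.distrib distrib_right)
lemma mm_diff_r: "((A::('d::finite) cmat) - B) ** C = A ** C - B ** C"
  by (simp add: matrix_matrix_mult_def vec_eq_iff sum_subtractf left_diff_distrib)
lemma mm_diff_l: "(C::('d::finite) cmat) ** (A - B) = C ** A - C ** B"
  by (simp add: matrix_matrix_mult_def vec_eq_iff sum_subtractf right_diff_distrib)

lemma fmat_zero: "fmat S (\<lambda>v. 0) = 0"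
  by (simp add: fmat_def)

lemma pd_spec:
  fixes A :: "('d::finite) cmat"
  assumes "pos_def A"
  shows "\<exists>S l. finite S \<and> onb S \<and> complete_set S \<and> A = fmat S l \<and> (\<forall>v\<in>S. l v > 0)
     \<and> (\<forall>v\<in>S. A *v v = complex_of_real (l v) *s v)"
proof -
  have h: "hermitian A" using assms pos_def_def by auto
  obtain S where S: "finite S" "eig_set A S" "\<forall>x. (\<forall>v\<in>S. cinner v x = 0) \<longrightarrow> x = 0"
    using spectral[OF h] by blast
  have c: "complete_set S" using S(3) complete_set_def by auto
  have o: "onb S" using S(2) eig_set_def by auto
  have pos: "\<forall>v\<in>S. Re (cinner v (A *v v)) > 0"
  proof
    fix v assume "v \<in> S"
    then have "cinner v v = 1" using o unfolding onb_def by fastforce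
    then have "v \<noteq> 0" by auto
    then show "Re (cinner v (A *v v)) > 0" using assms pos_def_def by auto
  qed
  show ?thesis
    apply (rule exI[of _ S], rule exI[of _ "\<lambda>v. Re (cinner v (A *v v))"])
    using S(1) o c fmat_A[OF S(2,1) c] pos S(2) unfolding eig_set_def by auto
qed

lemma pd_sqrt_ex:
  fixes A :: "('d::finite) cmat"
  assumes "pos_def A"
  shows "\<exists>X. pos_def X \<and> X ** X = A"
proof -
  obtain S l where S: "finite S" "onb S" "complete_set S" "A = fmat S l" "\<forall>v\<in>S. l v > 0"
    using pd_spec[OF assms] by blast
  define X where "X = fmat S (\<lambda>v. sqrt (l v))"
  have "pos_def X" unfolding X_def using S by (intro fmat_pd) auto
  moreover have "X ** X = A" unfolding X_def fmat_mult[OF S(2,1)] S(4)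
    using S(5) by (intro fmat_cong) (simp add: less_imp_le)
  ultimately show ?thesis by blast
qed

lemma pd_inv:
  fixes A :: "('d::finite) cmat"
  assumes "pos_def A"
  shows "A ** matrix_inv A = mat 1 \<and> matrix_inv A ** A = mat 1 \<and> pos_def (matrix_inv A)"
proof -
  obtain S l where S: "finite S" "onb S" "complete_set S" "A = fmat S l" "\<forall>v\<in>S. l v > 0"
    using pd_spec[OF assms] by blast
  define Y where "Y = fmat S (\<lambda>v. inverse (l v))"
  have pY: "pos_def Y" unfolding Y_def using S by (intro fmat_pd) auto
  have "A ** Y = fmat S (\<lambda>v. 1)" unfolding Y_def fmat_mult[OF S(2,1)] S(4)
    using S(5) by (intro fmat_cong) (metis less_irrefl right_inverse)
  then have AY: "A ** Y = mat 1" using fmat_one[OF S(2,1,3)] by simp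
  have "Y ** A = fmat S (\<lambda>v. 1)" unfolding Y_def fmat_mult[OF S(2,1)] S(4)
    using S(5) by (intro fmat_cong) (metis less_irrefl left_inverse)
  then have YA: "Y ** A = mat 1" using fmat_one[OF S(2,1,3)] by simp
  define Ai where "Ai = matrix_inv A"
  have Ai: "A ** Ai = mat 1 \<and> Ai ** A = mat 1"
    unfolding Ai_def matrix_inv_def by (rule someI[of _ Y]) (simp add: AY YA)
  have "Ai = Ai ** (A ** Y)" using AY by simp
  also have "\<dots> = Y" using Ai by (simp add: matrix_mul_assoc)
  finally show ?thesis using Ai pY Ai_def by simp
qed

lemma cinner_expand_diff:
  "cinner (a - complex_of_real m *s v) (a - complex_of_real m *s v) =
   cinner a a - complex_of_real m * cinner a v - complex_of_real m * cinner v a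
   + complex_of_real m * complex_of_real m * cinner v v"
  by (simp add: cinner_diff_left cinner_diff_right cinner_scale_left cinner_scale_right algebra_simps)

lemma cinner_expand_add:
  "cinner (a + complex_of_real m *s v) (a + complex_of_real m *s v) =
   cinner a a + complex_of_real m * cinner a v + complex_of_real m * cinner v a
   + complex_of_real m * complex_of_real m * cinner v v"
  by (simp add: cinner_add_left cinner_add_right cinner_scale_left cinner_scale_right algebra_simps)

lemma psd_sqrt_unique:
  fixes X Y :: "('d::finite) cmat"
  assumes X: "pos_semidef X" and Y: "pos_semidef Y" and eq: "X ** X = Y ** Y"
  shows "X = Y"
proof (rule ccontr)
  assume ne: "X \<noteq> Y"
  define Z where "Z = X - Y"
  have hX: "hermitian X" and hY: "hermitian Y" using X Y pos_semidef_def by auto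
  have hZ: "hermitian Z" using hX hY unfolding Z_def hermitian_def by (simp add: adjoint_diff)
  obtain S where S: "finite S" "eig_set Z S" "\<forall>x. (\<forall>v\<in>S. cinner v x = 0) \<longrightarrow> x = 0"
    using spectral[OF hZ] by blast
  have c: "complete_set S" using S(3) complete_set_def by auto
  have "\<exists>v\<in>S. Re (cinner v (Z *v v)) \<noteq> 0"
  proof (rule ccontr)
    assume "\<not> ?thesis"
    then have "Z = fmat S (\<lambda>v. 0)"
      using fmat_A[OF S(2,1) c] fmat_cong[of S "\<lambda>v. Re (cinner v (Z *v v))" "\<lambda>v. 0"] by auto
    then have "Z = 0" by (simp add: fmat_zero)
    then show False using ne Z_def by simp
  qed
  then obtain v where v: "v \<in> S" "Re (cinner v (Z *v v)) \<noteq> 0" by blast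
  define m where "m = Re (cinner v (Z *v v))"
  have m0: "m \<noteq> 0" using v m_def by simp
  have Zv: "Z *v v = complex_of_real m *s v" using S(2) v unfolding eig_set_def m_def by blast
  have vv: "cinner v v = 1" using S(2) v unfolding eig_set_def onb_def by auto
  define a where "a = X *v v"
  define b where "b = Y *v v"
  have ab: "a - b = complex_of_real m *s v" using Zv unfolding Z_def a_def b_def
    by (simp add: matrix_vector_mult_diff_rdistrib)
  have "cinner a a = cinner v ((X ** X) *v v)" unfolding a_def
    by (simp add: cinner_herm[OF hX] matrix_vector_mul_assoc[symmetric])
  moreover have "cinner b b = cinner v ((Y ** Y) *v v)" unfolding b_def
    by (simp add: cinner_herm[OF hY] matrix_vector_mul_assoc[symmetric])
  ultimately have aabb: "cinner a a = cinner b b" using eq by simp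
  have Ra: "Re (cinner v a) \<ge> 0" using X a_def pos_semidef_def by auto
  have Rb: "Re (cinner v b) \<ge> 0" using Y b_def pos_semidef_def by auto
  have ra: "Re (cinner a v) = Re (cinner v a)" using cinner_commute[of a v] by simp
  have rb: "Re (cinner b v) = Re (cinner v b)" using cinner_commute[of b v] by simp
  have b_eq: "b = a - complex_of_real m *s v" using ab by (simp add: algebra_simps)
  have a_eq: "a = b + complex_of_real m *s v" using ab by (simp add: algebra_simps)
  have e1: "m*m = 2*m*Re (cinner v a)"
  proof -
    have "Re (cinner b b) = Re (cinner a a) - 2*m*Re (cinner v a) + m*m"
      unfolding b_eq cinner_expand_diff using vv ra by simp
    then show ?thesis using aabb by simp
  qed
  have e2: "m*m = -2*m*Re (cinner v b)"
  proof -
    have "Re (cinner a a) = Re (cinner b b) + 2*m*Re (cinner v b) + m*m"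
      unfolding a_eq cinner_expand_add using vv rb by simp
    then show ?thesis using aabb by simp
  qed
  have "m*m > 0" using m0 by (cases "m > 0") (auto simp: zero_less_mult_iff)
  show False
  proof (cases "m > 0")
    case True
    then have "m * Re (cinner v b) \<ge> 0" using Rb by simp
    then show False using e2 \<open>m*m > 0\<close> by simp
  next
    case False
    then have "m < 0" using m0 by simp
    then have "m * Re (cinner v a) \<le> 0" using Ra by (simp add: mult_nonpos_nonneg)
    then show False using e1 \<open>m*m > 0\<close> by simp
  qed
qed

lemma lyap_zero:
  fixes R Z :: "('d::finite) cmat"
  assumes R: "pos_def R" and eq: "Z ** R + R ** Z = 0"
  shows "Z = 0"
proof -
  obtain S l where S: "finite S" "onb S" "complete_set S" "R = fmat S l" "\<forall>v\<in>S. l v > 0"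
     "\<forall>v\<in>S. R *v v = complex_of_real (l v) *s v"
    using pd_spec[OF R] by blast
  have hR: "hermitian R" using R pos_def_def by auto
  have Zv: "Z *v v = 0" if v: "v \<in> S" for v
  proof (rule ccontr)
    assume nz: "Z *v v \<noteq> 0"
    define w where "w = Z *v v"
    have "R *v w = (R ** Z) *v v" unfolding w_def by (simp add: matrix_vector_mul_assoc)
    also have "R ** Z = - (Z ** R)" using eq by (simp add: eq_neg_iff_add_eq_0 add.commute)
    also have "(- (Z ** R)) *v v = - (Z *v (R *v v))"
    proof -
      have "(- (Z ** R)) *v v = - ((Z ** R) *v v)"
        by (simp add: vec_eq_iff matrix_vector_mult_def sum_negf)
      then show ?thesis by (simp add: matrix_vector_mul_assoc)
    qed
    also have "\<dots> = - (complex_of_real (l v) *s w)" using S(6) v by (simp add: mv_scale w_def)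
    finally have Rw: "R *v w = - (complex_of_real (l v) *s w)" .
    have "Re (cinner w (R *v w)) > 0" using R nz w_def pos_def_def by auto
    moreover have "Re (cinner w (R *v w)) = - l v * (norm w)^2"
    proof -
      have "cinner w (- y) = - cinner w y" for y by (simp add: cinner_def sum_negf)
      then show ?thesis unfolding Rw by (simp add: cinner_scale_right cinner_self)
    qed
    moreover have "l v * (norm w)^2 \<ge> 0" using S(5) v by (simp add: less_imp_le)
    ultimately show False by simp
  qed
  have "Z *v x = 0 *v x" for x
  proof -
    have e: "(\<Sum>v\<in>S. cinner v x *s v) = x" by (rule expand[OF S(2,1,3), symmetric])
    have "Z *v x = Z *v (\<Sum>v\<in>S. cinner v x *s v)" by (simp only: e)
    also have "\<dots> = 0" using Zv by (simp add: mv_sum mv_scale)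
    finally show ?thesis by simp
  qed
  then show ?thesis using matrix_eq by blast
qed



lemma pd_psd: "pos_def A \<Longrightarrow> pos_semidef A"
  unfolding pos_def_def pos_semidef_def
  by (metis less_eq_real_def cinner_zero_left zero_complex.simps(1) Reals_0)

lemma pd_herm: "pos_def A \<Longrightarrow> hermitian A" unfolding pos_def_def by auto
lemma psd_herm: "pos_semidef A \<Longrightarrow> hermitian A" unfolding pos_semidef_def by auto

lemma msqrt_eq:
  fixes A X :: "('d::finite) cmat"
  assumes "pos_def A" "pos_semidef X" "X ** X = A"
  shows "msqrt A = X"
  unfolding msqrt_def
  using assms psd_sqrt_unique by (intro the_equality) auto

lemma msqrt_pd:
  fixes A :: "('d::finite) cmat"
  assumes "pos_def A"
  shows "pos_def (msqrt A) \<and> msqrt A ** msqrt A = A"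
proof -
  obtain X where X: "pos_def X" "X ** X = A" using pd_sqrt_ex[OF assms] by blast
  then have "msqrt A = X" using msqrt_eq[OF assms pd_psd[OF X(1)]] by simp
  then show ?thesis using X by simp
qed

lemma herm_prod3: "hermitian A \<Longrightarrow> hermitian B \<Longrightarrow> hermitian ((A::('d::finite) cmat) ** B ** A)"
  unfolding hermitian_def by (simp add: adjoint_mult matrix_mul_assoc)

lemma quad_prod3:
  fixes A B :: "('d::finite) cmat"
  assumes "hermitian A"
  shows "cinner x ((A ** B ** A) *v x) = cinner (A *v x) (B *v (A *v x))"
  by (simp add: cinner_herm[OF assms] matrix_vector_mul_assoc[symmetric])

lemma pd_congr:
  fixes P T :: "('d::finite) cmat"
  assumes P: "pos_def P" and T: "pos_def T"
  shows "pos_def (T ** P ** T)"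
proof -
  have hT: "hermitian T" using T pd_herm by auto
  have inv: "matrix_inv T ** T = mat 1" using pd_inv[OF T] by simp
  show ?thesis unfolding pos_def_def
  proof (rule conjI[OF herm_prod3[OF hT pd_herm[OF P]]], intro allI impI)
    fix x :: "complex^'d" assume x: "x \<noteq> 0"
    have "T *v x \<noteq> 0"
    proof
      assume "T *v x = 0"
      then have "matrix_inv T *v (T *v x) = 0" by simp
      then show False using x inv by (simp add: matrix_vector_mul_assoc)
    qed
    then show "cinner x ((T ** P ** T) *v x) \<in> \<real> \<and> 0 < Re (cinner x ((T ** P ** T) *v x))"
      unfolding quad_prod3[OF hT] using P pos_def_def by blast
  qed
qed

lemma psd_congr:
  fixes D R :: "('d::finite) cmat"
  assumes D: "hermitian D" and R: "pos_def R"
  shows "pos_semidef (D ** R ** D)"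
  unfolding pos_semidef_def
  using herm_prod3[OF D pd_herm[OF R]] quad_prod3[OF D] pd_psd[OF R] unfolding pos_semidef_def
  by auto

lemma diag_cinner: "(A::('d::finite) cmat) $ i $ i = cinner (axis i 1) (A *v axis i 1)"
  by (simp add: cinner_def matrix_vector_mult_def axis_def if_distrib if_distribR sum.delta cong: if_cong)

lemma trace_psd:
  fixes A :: "('d::finite) cmat"
  assumes "pos_semidef A"
  shows "trace A = complex_of_real (Re (trace A)) \<and> Re (trace A) \<ge> 0"
proof -
  have d: "A $ i $ i = complex_of_real (Re (A $ i $ i)) \<and> Re (A $ i $ i) \<ge> 0" for i
    using assms unfolding pos_semidef_def diag_cinner by (metis of_real_Re)
  have "trace A = (\<Sum>i\<in>UNIV. complex_of_real (Re (A $ i $ i)))"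
    unfolding trace_def using d by (intro sum.cong) auto
  then have "trace A = complex_of_real (\<Sum>i\<in>UNIV. Re (A $ i $ i))" by simp
  moreover have "(\<Sum>i\<in>UNIV. Re (A $ i $ i)) \<ge> 0" using d by (intro sum_nonneg) auto
  ultimately show ?thesis by simp
qed

lemma lyap_inv_lyap:
  fixes R X :: "('d::finite) cmat"
  assumes R: "pos_def R"
  shows "lyap R (lyap_inv R X) = X"
  unfolding lyap_def lyap_inv_def
proof (rule the_equality)
  fix Y assume "Y ** R + R ** Y = X ** R + R ** X"
  then have "(Y - X) ** R + R ** (Y - X) = 0"
    by (simp add: mm_diff_r mm_diff_l algebra_simps)
  then have "Y - X = 0" by (rule lyap_zero[OF R])
  then show "Y = X" by simp
qed simp



theorem theorem1:
  fixes P Q R :: "complex^'d^'d"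
  assumes "pos_def P" and "pos_def Q" and "pos_def R"
  shows "gen_bures R P Q = complex_of_real ((bw_norm R (bw_log R P - bw_log R Q))\<^sup>2)"
proof -
  note pP = assms(1) and pQ = assms(2) and pR = assms(3)
  define Ri where "Ri = matrix_inv R"
  have Ri: "R ** Ri = mat 1" "Ri ** R = mat 1" "pos_def Ri" using pd_inv[OF pR] Ri_def by auto
  define S where "S = msqrt Ri"
  have S: "pos_def S" "S ** S = Ri" using msqrt_pd[OF Ri(3)] S_def by auto
  define Si where "Si = matrix_inv S"
  have Si: "S ** Si = mat 1" "Si ** S = mat 1" "pos_def Si" using pd_inv[OF S(1)] Si_def by auto
  have SiSi: "Si ** Si = R"
  proof -
    have "Si ** Si = Si ** Si ** (Ri ** R)" using Ri by (simp add: matrix_mul_assoc)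
    also have "\<dots> = Si ** (Si ** S) ** S ** R" by (simp add: S(2)[symmetric] matrix_mul_assoc)
    also have "\<dots> = R" using Si by (simp add: matrix_mul_assoc)
    finally show ?thesis .
  qed
  have mR: "msqrt R = Si" using msqrt_eq[OF pR pd_psd[OF Si(3)] SiSi] .
  have SRS: "S ** R ** S = mat 1"
  proof -
    have "S ** R ** S = (Si ** S) ** (S ** R ** S)" using Si by simp
    also have "\<dots> = Si ** ((S ** S) ** R) ** S" by (simp add: matrix_mul_assoc)
    also have "\<dots> = mat 1" using S Ri Si by simp
    finally show ?thesis .
  qed
  define MP where "MP = msqrt (Si ** P ** Si)"
  define MQ where "MQ = msqrt (Si ** Q ** Si)"
  have MP: "pos_def MP" "MP ** MP = Si ** P ** Si"
    using msqrt_pd[OF pd_congr[OF pP Si(3)]] MP_def by auto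
  have MQ: "pos_def MQ" "MQ ** MQ = Si ** Q ** Si"
    using msqrt_pd[OF pd_congr[OF pQ Si(3)]] MQ_def by auto
  define GP where "GP = S ** MP ** S"
  define GQ where "GQ = S ** MQ ** S"
  have gP: "geo_mean Ri P = GP" unfolding geo_mean_def GP_def MP_def S_def Si_def by (simp add: Let_def)
  have gQ: "geo_mean Ri Q = GQ" unfolding geo_mean_def GQ_def MQ_def S_def Si_def by (simp add: Let_def)
  define F where "F = gen_fidelity R P Q"
  have Fe: "F = trace (MP ** Ri ** MQ)"
    unfolding F_def gen_fidelity_def mR MP_def MQ_def Ri_def by (simp add: Let_def)
  have hS: "hermitian S" and hMP: "hermitian MP" and hMQ: "hermitian MQ" and hRi: "hermitian Ri"
    and hR: "hermitian R"
    using S MP MQ Ri pR pd_herm by auto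
  have L1: "X ** S ** R ** S = X" for X
    by (metis SRS matrix_mul_assoc matrix_mul_rid)
  have L2: "X ** S ** Si = X" "X ** Si ** S = X" for X
    by (metis Si(1) matrix_mul_assoc matrix_mul_rid, metis Si(2) matrix_mul_assoc matrix_mul_rid)
  have L3: "X ** MP ** MP = X ** Si ** P ** Si" "X ** MQ ** MQ = X ** Si ** Q ** Si" for X
    by (metis MP(2) matrix_mul_assoc, metis MQ(2) matrix_mul_assoc)
  have GPP: "GP ** R ** GP = P"
    unfolding GP_def by (simp add: matrix_mul_assoc L1 L2 L3 SRS Si)
  have GQQ: "GQ ** R ** GQ = Q"
    unfolding GQ_def by (simp add: matrix_mul_assoc L1 L2 L3 SRS Si)
  have tG: "trace (S ** M1 ** S ** R ** S ** M2 ** S) = trace (Ri ** M1 ** M2)" for M1 M2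
  proof -
    have "trace (S ** M1 ** S ** R ** S ** M2 ** S) = trace (S ** M1 ** M2 ** S)"
      by (simp add: L1)
    also have "\<dots> = trace (S ** (S ** M1 ** M2))" by (rule trace_mul_sym)
    also have "\<dots> = trace (Ri ** M1 ** M2)" by (simp add: matrix_mul_assoc S(2))
    finally show ?thesis .
  qed
  have T1: "trace (GP ** R ** GQ) = cnj F"
  proof -
    have "trace (GP ** R ** GQ) = trace (Ri ** MP ** MQ)"
      unfolding GP_def GQ_def using tG by (simp add: matrix_mul_assoc)
    also have "\<dots> = trace ((MP ** MQ) ** Ri)" using trace_mul_sym[of Ri "MP ** MQ"] by (simp add: matrix_mul_assoc)
    also have "\<dots> = trace (MP ** (MQ ** Ri))" by (simp add: matrix_mul_assoc)
    also have "\<dots> = trace (MQ ** Ri ** MP)" using trace_mul_sym[of MP "MQ ** Ri"] by simp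
    also have "MQ ** Ri ** MP = adjoint_mat (MP ** Ri ** MQ)"
      using hMP hMQ hRi unfolding hermitian_def by (simp add: adjoint_mult matrix_mul_assoc)
    also have "trace \<dots> = cnj F" unfolding Fe trace_adjoint ..
    finally show ?thesis .
  qed
  have T2: "trace (GQ ** R ** GP) = F"
  proof -
    have "trace (GQ ** R ** GP) = trace (Ri ** MQ ** MP)"
      unfolding GP_def GQ_def using tG by (simp add: matrix_mul_assoc)
    also have "\<dots> = trace (MP ** (Ri ** MQ))" using trace_mul_sym[of "Ri ** MQ" MP] by simp
    also have "\<dots> = F" unfolding Fe by (simp add: matrix_mul_assoc)
    finally show ?thesis .
  qed
  define D where "D = GP - GQ"
  have hD: "hermitian D" unfolding D_def GP_def GQ_def
    using herm_prod3[OF hS hMP] herm_prod3[OF hS hMQ] unfolding hermitian_def by (simp add: adjoint_diff)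
  have logd: "bw_log R P - bw_log R Q = lyap_inv R D"
    unfolding bw_log_def lyap_inv_def Ri_def[symmetric] gP gQ D_def
    by (simp add: mm_diff_r mm_diff_l algebra_simps)
  have DRD: "D ** R ** D = GP ** R ** GP - GP ** R ** GQ - (GQ ** R ** GP - GQ ** R ** GQ)"
    unfolding D_def by (simp add: mm_diff_r mm_diff_l)
  have trD: "trace (D ** R ** D) = trace (P + Q) - complex_of_real (2 * Re F)"
    unfolding DRD trace_sub GPP GQQ T1 T2 trace_add
    using complex_add_cnj[of F] by (simp add: algebra_simps)
  have tp: "trace (D ** R ** D) = complex_of_real (Re (trace (D ** R ** D))) \<and> Re (trace (D ** R ** D)) \<ge> 0"
    by (rule trace_psd[OF psd_congr[OF hD pR]])
  have "(bw_norm R (bw_log R P - bw_log R Q))\<^sup>2 = Re (trace (D ** R ** D))"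
    unfolding logd bw_norm_def bw_inner_def lyap_inv_lyap[OF pR] using tp by simp
  then have "complex_of_real ((bw_norm R (bw_log R P - bw_log R Q))\<^sup>2) = trace (D ** R ** D)"
    using tp by simp
  also have "\<dots> = gen_bures R P Q" unfolding trD gen_bures_def F_def by simp
  finally show ?thesis by simp
qed

end
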